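(* Let $(N,g,J)$ be a strict nearly Kähler manifold with canonical connection curvature $\bar R$, regarded as the section $\bar R=\tfrac12\sum_{i,j}e_i\wedge e_j\otimes\bar R_{e_i,e_j}$ of $\Lambda^2\mathrm{T}\otimes\Lambda^2\mathrm{T}$ (a 2-form with values in $\Lambda^2\mathrm T$). Let $\pi_{\mathrm{Sym}^2}$ denote the orthogonal projection from $\Lambda^2\mathrm T\otimes\Lambda^2\mathrm T$ onto $\mathrm{Sym}^2(\Lambda^2\mathrm T)$. Then $$\pi_{\mathrm{Sym}^2}\Big(\sum_{i,j}e_j\wedge e_i\lrcorner\,\bar R_{e_i,e_j}\bar R\Big)=\tfrac12\,q(\bar R)\bar R,$$ where $\bar R_{e_i,e_j}\bar R$ denotes the natural (derivation) action of the skew endomorphism $\bar R_{e_i,e_j}$ on the tensor $\bar R$, and the interior product $e_i\lrcorner$ and exterior product $e_j\wedge$ on the left-hand side are applied only to the first factor of $\Lambda^2\mathrm T\otimes\Lambda^2\mathrm T$.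
   Context: Nearly Kähler manifold: a Riemannian manifold $(N,g)$ with $g$-orthogonal almost complex structure $J$ with $(\nabla^g_XJ)X=0$ for all $X$; strict if $\nabla^g_XJ\ne0$ for all $X\neq0$. Canonical connection: $\bar\nabla=\nabla^g+\tau$, $\tau_X=-\tfrac12J\circ(\nabla^g_XJ)$, with curvature $\bar R_{X,Y}=[\bar\nabla_X,\bar\nabla_Y]-\bar\nabla_{[X,Y]}$; $\bar R$ is pair symmetric. Write $\mathrm T=\mathrm TN$, $\{e_i\}$ a local orthonormal frame, 2-forms identified with skew endomorphisms via $g$; for $A\in\Lambda^2\mathrm T\cong\mathfrak{so}(\mathrm T)$, $A_*$ denotes its natural derivation action on tensors. The curvature endomorphism $q(\bar R)$ of a tensor bundle is $q(\bar R)K:=\tfrac12\sum_{i,j}(e_i\wedge e_j)_*\,\bar R_{e_i,e_j}K$, equivalently $q(\bar R)K=\sum_\alpha(\omega_\alpha)_*\bar R(\omega_\alpha)_*K$ for an orthonormal basis $(\omega_\alpha)$ of $\Lambda^2\mathrm T$. *)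

theory Defs
  imports Complex_Main
begin

text \<open>The tangent space at a point is modelled by
  real coordinates with respect to an orthonormal frame indexed by the finite type 'n,
  so g is the standard inner product.  A tensor in T^{\<otimes>4} (vectors and covectors
  identified via g) is given by its components; \<Lambda>^2T \<otimes> \<Lambda>^2T sits inside it,
  with e_a \<and> e_b = e_a \<otimes> e_b - e_b \<otimes> e_a.\<close>

type_synonym 'n tensor4 = "'n \<Rightarrow> 'n \<Rightarrow> 'n \<Rightarrow> 'n \<Rightarrow> real"

text \<open>An endomorphism A of T is given by its matrix M with M a x = g(A e_x, e_a).\<close>
type_synonym 'n endo = "'n \<Rightarrow> 'n \<Rightarrow> real"

definition kd :: "'n \<Rightarrow> 'n \<Rightarrow> real" where
  "kd x y = (if x = y then 1 else 0)"

definition der4 :: "('n::finite) endo \<Rightarrow> 'n tensor4 \<Rightarrow> 'n tensor4" where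
  "der4 M K = (\<lambda>a b c d. (\<Sum>x\<in>UNIV.
      M a x * K x b c d + M b x * K a x c d + M c x * K a b x d + M d x * K a b c x))"

text \<open>The skew endomorphism e_i \<and> e_j : X \<mapsto> g(e_i,X) e_j - g(e_j,X) e_i.\<close>
definition wedge_endo :: "'n \<Rightarrow> 'n \<Rightarrow> 'n endo" where
  "wedge_endo i j = (\<lambda>d c. kd i c * kd j d - kd j c * kd i d)"

text \<open>Components of the canonical curvature: R a b c d = g(Rbar_{e_a,e_b} e_c, e_d).
  Then the section Rbar = 1/2 \<Sum> e_i \<and> e_j \<otimes> Rbar_{e_i,e_j} of \<Lambda>^2 \<otimes> \<Lambda>^2 has exactly
  the 4-tensor components R.\<close>
definition curv_endo :: "'n tensor4 \<Rightarrow> 'n \<Rightarrow> 'n \<Rightarrow> 'n endo" where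
  "curv_endo R i j = (\<lambda>d c. R i j c d)"

definition q_curv :: "('n::finite) tensor4 \<Rightarrow> 'n tensor4 \<Rightarrow> 'n tensor4" where
  "q_curv R K = (\<lambda>a b c d. (1/2) * (\<Sum>i\<in>UNIV. \<Sum>j\<in>UNIV.
      der4 (wedge_endo i j) (der4 (curv_endo R i j) K) a b c d))"

definition wedge_int_first :: "'n \<Rightarrow> 'n \<Rightarrow> 'n tensor4 \<Rightarrow> 'n tensor4" where
  "wedge_int_first j i K = (\<lambda>a b c d. kd j a * K i b c d - K i a c d * kd j b)"

definition proj_sym2 :: "'n tensor4 \<Rightarrow> 'n tensor4" where
  "proj_sym2 K = (\<lambda>a b c d. (K a b c d + K c d a b) / 2)"

end

theory Submission
  imports Defs
begin

lemma kd_sum1[simp]: "(\<Sum>x\<in>(UNIV::(_::finite) set). kd i x * f x) = (f i :: real)"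
proof -
  have "(\<Sum>x\<in>UNIV. kd i x * f x) = (\<Sum>x\<in>UNIV. if i = x then f x else 0)"
    by (rule sum.cong) (auto simp: kd_def)
  also have "\<dots> = f i" by (simp add: sum.delta sum.delta')
  finally show ?thesis .
qed
lemma kd_sum2[simp]: "(\<Sum>x\<in>(UNIV::(_::finite) set). kd x i * f x) = (f i :: real)"
proof -
  have "(\<Sum>x\<in>UNIV. kd x i * f x) = (\<Sum>x\<in>UNIV. if x = i then f x else 0)"
    by (rule sum.cong) (auto simp: kd_def)
  also have "\<dots> = f i" by (simp add: sum.delta sum.delta')
  finally show ?thesis .
qed

lemma kd_lin: "(\<Sum>x\<in>(UNIV::'n::finite set). (kd i x * p - kd j x * q) * f x) = p * f i - q * f j"
proof -
  have "(\<Sum>x\<in>(UNIV::'n set). (kd i x * p - kd j x * q) * f x)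
      = (\<Sum>x\<in>UNIV. kd i x * (p * f x)) - (\<Sum>x\<in>UNIV. kd j x * (q * f x))"
    by (subst sum_subtractf[symmetric]) (rule sum.cong, auto simp: algebra_simps)
  then show ?thesis by simp
qed

lemma der4_wedge:
  "der4 (wedge_endo i j) K a b c d =
     kd j a * K i b c d - kd i a * K j b c d + kd j b * K a i c d - kd i b * K a j c d
   + kd j c * K a b i d - kd i c * K a b j d + kd j d * K a b c i - kd i d * K a b c j"
proof -
  have e: "\<And>p. wedge_endo i j p x = kd i x * kd j p - kd j x * kd i p" for x
    by (simp add: wedge_endo_def)
  show ?thesis
  unfolding der4_def e sum.distrib kd_lin by simp
qed

definition S :: "('n::finite) tensor4 \<Rightarrow> 'n \<Rightarrow> 'n \<Rightarrow> 'n tensor4" where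
  "S R i j = der4 (curv_endo R i j) R"

lemma kd_sum3[simp]: "(\<Sum>x\<in>(UNIV::(_::finite) set). f x * kd x i) = (f i :: real)"
  using kd_sum2[of i f] by (simp add: mult.commute)

lemma kd_dsum[simp]: "(\<Sum>i\<in>(UNIV::(_::finite) set). \<Sum>j\<in>(UNIV::(_::finite) set). kd i a * G i j) = (\<Sum>j\<in>UNIV. G a j :: real)"
  by (subst sum.swap) simp

lemma sum_neg_cong: "(\<And>t. f t = - g t) \<Longrightarrow> sum f A = - sum g (A::'a set)" for f g :: "'a \<Rightarrow> real"
  by (simp add: sum_negf[symmetric])

lemma S_ij:
  assumes skew12: "\<And>a b c d. R b a c d = - R a b c d"
  shows "S R j i x y z w = - S R i j x y z w"
  unfolding S_def der4_def curv_endo_def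
  by (rule sum_neg_cong) (simp add: skew12[of j i])

lemma S_12:
  assumes skew12: "\<And>a b c d. R b a c d = - R a b c d"
  shows "S R i j y x z w = - S R i j x y z w"
  unfolding S_def der4_def curv_endo_def
  by (rule sum_neg_cong) (simp add: skew12[of _ x] skew12[of y _] algebra_simps)

lemma S_pair:
  assumes pair_sym: "\<And>a b c d. R c d a b = R a b c d"
  shows "S R i j z w x y = S R i j x y z w"
  unfolding S_def der4_def curv_endo_def
  by (rule sum.cong, simp, simp add: pair_sym[of x y _ w] pair_sym[of x y z _] pair_sym[of _ y z w] pair_sym[of x _ z w] algebra_simps)

theorem lemma2p2:
  fixes R :: "('n::finite) tensor4"
  assumes skew12: "\<And>a b c d. R b a c d = - R a b c d"
    and skew34: "\<And>a b c d. R a b d c = - R a b c d"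
    and pair_sym: "\<And>a b c d. R c d a b = R a b c d"
  shows "proj_sym2 (\<lambda>a b c d. \<Sum>i\<in>UNIV. \<Sum>j\<in>UNIV.
            wedge_int_first j i (der4 (curv_endo R i j) R) a b c d)
         = (\<lambda>a b c d. (1/2) * q_curv R R a b c d)"
proof -
  define F where "F a b c d = (\<Sum>i\<in>UNIV. S R i a i b c d)" for a b c d
  have T: "(\<Sum>i\<in>UNIV. \<Sum>j\<in>UNIV.
            wedge_int_first j i (der4 (curv_endo R i j) R) a b c d) = F a b c d - F b a c d" for a b c d
    unfolding wedge_int_first_def F_def S_def[symmetric]
    by (simp add: sum_subtractf)
  have q: "q_curv R R a b c d = F a b c d - F b a c d + F c d a b - F d c a b" for a b c d
  proof -
    have 1: "(\<Sum>j\<in>UNIV. S R a j j b c d) = - F a b c d"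
      unfolding F_def by (simp add: S_ij[OF skew12, where j=a] sum_negf)
    have 2: "(\<Sum>i\<in>UNIV. S R i b a i c d) = - F b a c d"
      unfolding F_def by (simp add: S_12[OF skew12, where y=a] sum_negf)
    have 3: "(\<Sum>j\<in>UNIV. S R b j a j c d) = F b a c d"
      unfolding F_def by (simp add: S_12[OF skew12, where y=a] S_ij[OF skew12, where j=b] sum_negf)
    have 4: "(\<Sum>i\<in>UNIV. S R i c a b i d) = F c d a b"
      unfolding F_def by (simp add: S_pair[OF pair_sym, where z=a and w=b])
    have 5: "(\<Sum>j\<in>UNIV. S R c j a b j d) = - F c d a b"
      unfolding F_def by (simp add: S_pair[OF pair_sym, where z=a and w=b] S_ij[OF skew12, where j=c] sum_negf)
    have 6: "(\<Sum>i\<in>UNIV. S R i d a b c i) = - F d c a b"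
      unfolding F_def by (simp add: S_pair[OF pair_sym, where z=a and w=b] S_12[OF skew12, where y=c] sum_negf)
    have 7: "(\<Sum>j\<in>UNIV. S R d j a b c j) = F d c a b"
      unfolding F_def by (simp add: S_pair[OF pair_sym, where z=a and w=b] S_12[OF skew12, where y=c] S_ij[OF skew12, where j=d] sum_negf)
    show ?thesis
      unfolding q_curv_def der4_wedge S_def[symmetric]
      by (simp add: sum.distrib sum_subtractf 1 2 3 4 5 6 7 F_def[symmetric])
  qed
  show ?thesis
    unfolding proj_sym2_def T q by (rule ext)+ simp
qed

end
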